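(* Let $(a_i,b_i)\subseteq[0,1]$ be a countable family of pairwise disjoint, non-empty open intervals and let $f_i$ be $T$-norms. Let $g$ be their ordinal sum. If every $f_i$ satisfies property $A$, then $g$ satisfies property $A$. If every $f_i$ satisfies property $B$, then $g$ satisfies property $B$.
   Context: A $T$-norm is a function $\otimes:[0,1]^2\to[0,1]$ that is commutative, associative, monotonic (i.e. $x\le y$ implies $x\otimes z\le y\otimes z$) and has $1$ as neutral element ($x\otimes 1=x$). The ordinal sum $g$ of the family $(f_i,a_i,b_i)$ is defined by $$g(x,y)=\begin{cases} a_i+(b_i-a_i)\,f_i\!\left(\frac{x-a_i}{b_i-a_i},\frac{y-a_i}{b_i-a_i}\right) & \text{if } (x,y)\in[a_i,b_i]^2,\\ \min(x,y) & \text{otherwise,}\end{cases}$$ and is itself a $T$-norm. A function $f:[0,1]^2\to[0,1]$ satisfies property $A$ if for all $0\le x\le y\le z\le w\le 1$, $w+x\le y+z$ implies $f(x,w)\le f(y,z)$. It satisfies property $B$ (is $2$-increasing) if for all $0\le x\le y\le 1$ and $0\le z\le w\le 1$, $f(x,w)-f(x,z)\le f(y,w)-f(y,z)$. *)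

theory Defs
  imports "HOL-Analysis.Analysis"
begin

text \<open>T-norms as functions on [0,1]^2 (values outside the unit square are irrelevant).\<close>
definition tnorm :: "(real \<Rightarrow> real \<Rightarrow> real) \<Rightarrow> bool" where
  "tnorm f \<longleftrightarrow>
     (\<forall>x\<in>{0..1}. \<forall>y\<in>{0..1}. f x y \<in> {0..1}) \<and>
     (\<forall>x\<in>{0..1}. \<forall>y\<in>{0..1}. f x y = f y x) \<and>
     (\<forall>x\<in>{0..1}. \<forall>y\<in>{0..1}. \<forall>z\<in>{0..1}. f (f x y) z = f x (f y z)) \<and>
     (\<forall>x\<in>{0..1}. \<forall>y\<in>{0..1}. \<forall>z\<in>{0..1}. x \<le> y \<longrightarrow> f x z \<le> f y z) \<and>
     (\<forall>x\<in>{0..1}. f x 1 = x)"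

text \<open>If (x,y) lies in several squares
  (only possible at a shared endpoint), all candidate values coincide for T-norms,
  so the choice is immaterial.\<close>
definition ordinal_sum ::
  "'i set \<Rightarrow> ('i \<Rightarrow> real \<Rightarrow> real \<Rightarrow> real) \<Rightarrow> ('i \<Rightarrow> real) \<Rightarrow> ('i \<Rightarrow> real) \<Rightarrow> real \<Rightarrow> real \<Rightarrow> real" where
  "ordinal_sum I f a b x y =
     (if \<exists>i\<in>I. x \<in> {a i..b i} \<and> y \<in> {a i..b i}
      then (let i = (SOME i. i \<in> I \<and> x \<in> {a i..b i} \<and> y \<in> {a i..b i})
            in a i + (b i - a i) * f i ((x - a i) / (b i - a i)) ((y - a i) / (b i - a i)))
      else min x y)"

definition propA :: "(real \<Rightarrow> real \<Rightarrow> real) \<Rightarrow> bool" where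
  "propA f \<longleftrightarrow> (\<forall>x y z w. 0 \<le> x \<and> x \<le> y \<and> y \<le> z \<and> z \<le> w \<and> w \<le> 1 \<and> w + x \<le> y + z
                    \<longrightarrow> f x w \<le> f y z)"

definition propB :: "(real \<Rightarrow> real \<Rightarrow> real) \<Rightarrow> bool" where
  "propB f \<longleftrightarrow> (\<forall>x y z w. 0 \<le> x \<and> x \<le> y \<and> y \<le> 1 \<and> 0 \<le> z \<and> z \<le> w \<and> w \<le> 1
                    \<longrightarrow> f x w - f x z \<le> f y w - f y z)"

end

theory Submission
  imports Defs
begin

lemma tn_facts:
  assumes "tnorm f"
  shows tn_range: "\<And>x y. x\<in>{0..1} \<Longrightarrow> y\<in>{0..1} \<Longrightarrow> 0 \<le> f x y \<and> f x y \<le> 1"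
    and tn_comm: "\<And>x y. x\<in>{0..1} \<Longrightarrow> y\<in>{0..1} \<Longrightarrow> f x y = f y x"
    and tn_mono1: "\<And>x y z. x\<in>{0..1} \<Longrightarrow> y\<in>{0..1} \<Longrightarrow> z\<in>{0..1} \<Longrightarrow> x \<le> y \<Longrightarrow> f x z \<le> f y z"
    and tn_one: "\<And>x. x\<in>{0..1} \<Longrightarrow> f x 1 = x"
  using assms unfolding tnorm_def by auto

lemma tn_one': "tnorm f \<Longrightarrow> x\<in>{0..1} \<Longrightarrow> f 1 x = x"
  using tn_comm[of f x 1] tn_one[of f x] by auto

lemma tn_le: "tnorm f \<Longrightarrow> x\<in>{0..1} \<Longrightarrow> y\<in>{0..1} \<Longrightarrow> f x y \<le> x"
  using tn_comm[of f x y] tn_mono1[of f y 1 x] tn_one'[of f x] by auto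

lemma tn_zero: "tnorm f \<Longrightarrow> x\<in>{0..1} \<Longrightarrow> f x 0 = 0"
  using tn_le[of f 0 x] tn_comm[of f x 0] tn_range[of f x 0] by auto

definition mon :: "real set \<Rightarrow> (real \<Rightarrow> real) \<Rightarrow> bool" where
  "mon S h \<longleftrightarrow> (\<forall>s\<in>S. \<forall>t\<in>S. s \<le> t \<longrightarrow> h s \<le> h t)"

lemma mon_glue: "mon {p..q} h \<Longrightarrow> mon {q..r} h \<Longrightarrow> mon {p..r} h"
  unfolding mon_def
proof (intro ballI impI)
  fix s t assume A: "\<forall>s\<in>{p..q}. \<forall>t\<in>{p..q}. s \<le> t \<longrightarrow> h s \<le> h t"
    and B: "\<forall>s\<in>{q..r}. \<forall>t\<in>{q..r}. s \<le> t \<longrightarrow> h s \<le> h t"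
    and st: "s \<in> {p..r}" "t \<in> {p..r}" "s \<le> t"
  show "h s \<le> h t"
  proof (cases "t \<le> q")
    case True then show ?thesis using A st by auto
  next
    case False
    show ?thesis
    proof (cases "q \<le> s")
      case True then show ?thesis using B st by auto
    next
      case False
      then have "h s \<le> h q" using A st \<open>\<not> t \<le> q\<close> by auto
      also have "h q \<le> h t" using B st \<open>\<not> t \<le> q\<close> False by auto
      finally show ?thesis .
    qed
  qed
qed

lemma mon_cong: "(\<And>u. u\<in>S \<Longrightarrow> h u = k u) \<Longrightarrow> mon S k \<Longrightarrow> mon S h"
  unfolding mon_def by auto

lemma mon_lin: "mon S (\<lambda>u. c * u + d)" if "c \<ge> 0" for c d :: real
  using that unfolding mon_def by (auto intro: mult_left_mono)

locale OS =
  fixes I :: "'i set" and f :: "'i \<Rightarrow> real \<Rightarrow> real \<Rightarrow> real" and a b :: "'i \<Rightarrow> real"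
  assumes ab: "\<And>i. i \<in> I \<Longrightarrow> 0 \<le> a i \<and> a i < b i \<and> b i \<le> 1"
    and disj: "\<And>i j. i \<in> I \<Longrightarrow> j \<in> I \<Longrightarrow> i \<noteq> j \<Longrightarrow> {a i<..<b i} \<inter> {a j<..<b j} = {}"
    and tn: "\<And>i. i \<in> I \<Longrightarrow> tnorm (f i)"
begin

definition F where
  "F i u v = a i + (b i - a i) * f i ((u - a i) / (b i - a i)) ((v - a i) / (b i - a i))"

abbreviation g where "g \<equiv> ordinal_sum I f a b"

definition s where "s i u = (u - a i) / (b i - a i)"

lemma F_s: "F i u v = a i + (b i - a i) * f i (s i u) (s i v)"
  unfolding F_def s_def by simp

lemma s_range: "i \<in> I \<Longrightarrow> u \<in> {a i..b i} \<Longrightarrow> s i u \<in> {0..1}"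
  using ab[of i] by (auto simp: s_def divide_le_eq_1)

lemma s_mono: "i \<in> I \<Longrightarrow> u \<le> v \<Longrightarrow> s i u \<le> s i v"
  using ab[of i] unfolding s_def by (auto intro: divide_right_mono)

lemma s_a: "i \<in> I \<Longrightarrow> s i (a i) = 0" and s_b: "i \<in> I \<Longrightarrow> s i (b i) = 1"
  using ab[of i] by (auto simp: s_def)

lemma sep: assumes "i \<in> I" "j \<in> I" "i \<noteq> j" shows "b i \<le> a j \<or> b j \<le> a i"
proof (rule ccontr)
  assume "\<not> ?thesis"
  then have h: "a j < b i" "a i < b j" by auto
  define m where "m = (max (a i) (a j) + min (b i) (b j)) / 2"
  have "m \<in> {a i<..<b i} \<inter> {a j<..<b j}"
    using h ab[OF assms(1)] ab[OF assms(2)] unfolding m_def by auto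
  then show False using disj[OF assms] by auto
qed

lemma F_ub: "i \<in> I \<Longrightarrow> u \<in> {a i..b i} \<Longrightarrow> F i u (b i) = u"
  using tn_one[OF tn[of i] s_range[of i u]] ab[of i] by (simp add: F_s s_b) (simp add: s_def)

lemma F_ua: "i \<in> I \<Longrightarrow> u \<in> {a i..b i} \<Longrightarrow> F i u (a i) = a i"
  using tn_zero[OF tn[of i] s_range[of i u]] by (simp add: F_s s_a)

lemma F_comm: "i \<in> I \<Longrightarrow> u \<in> {a i..b i} \<Longrightarrow> v \<in> {a i..b i} \<Longrightarrow> F i u v = F i v u"
  using tn_comm[OF tn[of i] s_range[of i u] s_range[of i v]] by (simp add: F_s)

lemma F_le: "i \<in> I \<Longrightarrow> u \<in> {a i..b i} \<Longrightarrow> v \<in> {a i..b i} \<Longrightarrow> F i u v \<le> u"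
proof -
  assume h: "i \<in> I" "u \<in> {a i..b i}" "v \<in> {a i..b i}"
  have "f i (s i u) (s i v) \<le> s i u" using tn_le[OF tn[of i] s_range[of i u] s_range[of i v]] h by auto
  then have "a i + (b i - a i) * f i (s i u) (s i v) \<le> a i + (b i - a i) * s i u"
    using ab[of i] h by (auto intro: mult_left_mono)
  also have "\<dots> = u" using ab[of i] h by (simp add: s_def)
  finally show ?thesis by (simp add: F_s)
qed

lemma F_ge: "i \<in> I \<Longrightarrow> u \<in> {a i..b i} \<Longrightarrow> v \<in> {a i..b i} \<Longrightarrow> a i \<le> F i u v"
  using tn_range[OF tn[of i] s_range[of i u] s_range[of i v]] ab[of i] by (simp add: F_s)

lemma L_in: assumes "i \<in> I" "u \<in> {a i..b i}" "v \<in> {a i..b i}" shows "g u v = F i u v"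
proof -
  have ex: "\<exists>i\<in>I. u \<in> {a i..b i} \<and> v \<in> {a i..b i}" using assms by blast
  define j where "j = (SOME i. i \<in> I \<and> u \<in> {a i..b i} \<and> v \<in> {a i..b i})"
  have j: "j \<in> I" "u \<in> {a j..b j}" "v \<in> {a j..b j}"
    using someI_ex[of "\<lambda>i. i \<in> I \<and> u \<in> {a i..b i} \<and> v \<in> {a i..b i}"] ex unfolding j_def by auto
  have g: "g u v = F j u v" unfolding ordinal_sum_def F_def using ex by (simp add: j_def Let_def)
  show ?thesis
  proof (cases "j = i")
    case True then show ?thesis using g by simp
  next
    case False
    from sep[OF assms(1) j(1) False[symmetric]] show ?thesis
    proof
      assume "b i \<le> a j"
      then have "u = b i" "v = b i" "u = a j" using assms j by auto
      then show ?thesis using g F_ub[OF assms(1), of "b i"] F_ua[OF j(1), of "a j"] j assms by auto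
    next
      assume "b j \<le> a i"
      then have "u = a i" "v = a i" "u = b j" using assms j by auto
      then show ?thesis using g F_ua[OF assms(1), of "a i"] F_ub[OF j(1), of "b j"] j assms by auto
    qed
  qed
qed

lemma L_out: assumes h: "\<not> (\<exists>i\<in>I. u \<in> {a i..b i} \<and> v \<in> {a i..b i})" shows "g u v = min u v"
  by (simp only: ordinal_sum_def h if_False)


lemma G1: assumes "i \<in> I" "a i < v" "v < b i" "u \<le> a i" shows "g u v = u"
proof (cases "\<exists>j\<in>I. u \<in> {a j..b j} \<and> v \<in> {a j..b j}")
  case True
  then obtain j where j: "j \<in> I" "u \<in> {a j..b j}" "v \<in> {a j..b j}" by blast
  have "j = i"
  proof (rule ccontr)
    assume "j \<noteq> i"
    from sep[OF assms(1) j(1)] this show False using assms j by auto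
  qed
  then have "u = a i" using j assms by auto
  then show ?thesis using L_in[OF assms(1), of u v] F_comm[OF assms(1), of u v] F_ua[OF assms(1), of v] assms ab[of i] by auto
next
  case False then show ?thesis using L_out assms by auto
qed

lemma G2: assumes "i \<in> I" "a i < v" "v < b i" "b i \<le> u" shows "g u v = v"
proof (cases "\<exists>j\<in>I. u \<in> {a j..b j} \<and> v \<in> {a j..b j}")
  case True
  then obtain j where j: "j \<in> I" "u \<in> {a j..b j}" "v \<in> {a j..b j}" by blast
  have "j = i"
  proof (rule ccontr)
    assume "j \<noteq> i"
    from sep[OF assms(1) j(1)] this show False using assms j by auto
  qed
  then have "u = b i" using j assms by auto
  then show ?thesis using L_in[OF assms(1), of u v] F_comm[OF assms(1), of u v] F_ub[OF assms(1), of v] assms ab[of i] by auto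
next
  case False then show ?thesis using L_out assms by auto
qed

lemma G3: assumes "\<not> (\<exists>i\<in>I. a i < v \<and> v < b i)" shows "g u v = min u v"
proof (cases "\<exists>j\<in>I. u \<in> {a j..b j} \<and> v \<in> {a j..b j}")
  case True
  then obtain j where j: "j \<in> I" "u \<in> {a j..b j}" "v \<in> {a j..b j}" by blast
  then have "v = a j \<or> v = b j" using assms by force
  then show ?thesis
  proof
    assume "v = a j" then show ?thesis using L_in[OF j] F_ua[OF j(1,2)] j by auto
  next
    assume "v = b j" then show ?thesis using L_in[OF j] F_ub[OF j(1,2)] j by auto
  qed
next
  case False then show ?thesis using L_out by auto
qed

lemma KB: assumes "i \<in> I" "propB (f i)" "z \<le> w" "z \<in> {a i..b i}" "w \<in> {a i..b i}"
  shows "mon {a i..b i} (\<lambda>u. F i u w - F i u z)"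
  unfolding mon_def
proof (intro ballI impI)
  fix u1 u2 assume u: "u1 \<in> {a i..b i}" "u2 \<in> {a i..b i}" "u1 \<le> u2"
  have "f i (s i u1) (s i w) - f i (s i u1) (s i z) \<le> f i (s i u2) (s i w) - f i (s i u2) (s i z)"
    using assms(2) unfolding propB_def
    using s_range[OF assms(1) u(1)] s_range[OF assms(1) u(2)] s_range[OF assms(1) assms(4)]
      s_range[OF assms(1) assms(5)] s_mono[OF assms(1) u(3)] s_mono[OF assms(1) assms(3)] by auto
  then have "(b i - a i) * (f i (s i u1) (s i w) - f i (s i u1) (s i z)) \<le> (b i - a i) * (f i (s i u2) (s i w) - f i (s i u2) (s i z))"
    using ab[OF assms(1)] by (intro mult_left_mono) auto
  then show "F i u1 w - F i u1 z \<le> F i u2 w - F i u2 z" by (simp add: F_s algebra_simps)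
qed

lemma KA: assumes "i \<in> I" "propA (f i)" "u1 \<le> u2" "u2 \<le> u3" "u3 \<le> u4" "u1 \<in> {a i..b i}" "u4 \<in> {a i..b i}"
  "u4 + u1 \<le> u2 + u3"
  shows "F i u1 u4 \<le> F i u2 u3"
proof -
  have r: "u2 \<in> {a i..b i}" "u3 \<in> {a i..b i}" using assms by auto
  have "s i u4 + s i u1 \<le> s i u2 + s i u3"
  proof -
    have "(u4 - a i + (u1 - a i)) / (b i - a i) \<le> (u2 - a i + (u3 - a i)) / (b i - a i)"
      using assms ab[OF assms(1)] by (intro divide_right_mono) auto
    then show ?thesis unfolding s_def by (simp only: add_divide_distrib[symmetric])
  qed
  then have "f i (s i u1) (s i u4) \<le> f i (s i u2) (s i u3)"
    using assms(2) unfolding propA_def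
    using s_range[OF assms(1) assms(6)] s_range[OF assms(1) assms(7)] s_range[OF assms(1) r(1)] s_range[OF assms(1) r(2)]
      s_mono[OF assms(1) assms(3)] s_mono[OF assms(1) assms(4)] s_mono[OF assms(1) assms(5)] by auto
  then have "(b i - a i) * f i (s i u1) (s i u4) \<le> (b i - a i) * f i (s i u2) (s i u3)"
    using ab[OF assms(1)] by (intro mult_left_mono) auto
  then show ?thesis by (simp add: F_s)
qed

lemma g_le: assumes "x \<le> w" shows "g x w \<le> x"
proof (cases "\<exists>j\<in>I. x \<in> {a j..b j} \<and> w \<in> {a j..b j}")
  case True
  then obtain j where j: "j \<in> I" "x \<in> {a j..b j}" "w \<in> {a j..b j}" by blast
  then show ?thesis using L_in[OF j] F_le[OF j] by simp
next
  case False then show ?thesis using L_out assms by auto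
qed

lemma propA_g: assumes "\<forall>i\<in>I. propA (f i)" shows "propA g"
  unfolding propA_def
proof (intro allI impI)
  fix x y z w :: real
  assume h: "0 \<le> x \<and> x \<le> y \<and> y \<le> z \<and> z \<le> w \<and> w \<le> 1 \<and> w + x \<le> y + z"
  have gx: "g x w \<le> x" using g_le h by auto
  show "g x w \<le> g y z"
  proof (cases "\<exists>j\<in>I. y \<in> {a j..b j} \<and> z \<in> {a j..b j}")
    case False then show ?thesis using L_out[OF False] gx h by auto
  next
    case True
    then obtain i where i: "i \<in> I" "y \<in> {a i..b i}" "z \<in> {a i..b i}" by blast
    have gyz: "g y z = F i y z" using L_in[OF i] .
    show ?thesis
    proof (cases "x \<le> a i")
      case True then show ?thesis using gx gyz F_ge[OF i] by auto
    next
      case xa: False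
      show ?thesis
      proof (cases "w \<le> b i")
        case True
        then have "F i x w \<le> F i y z" using KA[OF i(1) _ , of x y z w] assms i xa h by auto
        moreover have "g x w = F i x w" using L_in[OF i(1), of x w] True xa h i by auto
        ultimately show ?thesis using gyz by simp
      next
        case False
        define x' where "x' = y + z - b i"
        have "F i x' (b i) \<le> F i y z" using KA[OF i(1) _ , of x' y z "b i"] assms i xa h False
          unfolding x'_def by auto
        moreover have "F i x' (b i) = x'" using F_ub[OF i(1), of x'] i xa h False unfolding x'_def by auto
        ultimately show ?thesis using gyz gx h False unfolding x'_def by auto
      qed
    qed
  qed
qed


lemma mon_aff: "(\<And>u. u\<in>S \<Longrightarrow> h u = c * u + d) \<Longrightarrow> c \<ge> 0 \<Longrightarrow> mon S h"
  by (rule mon_cong[of S h "\<lambda>u. c * u + d"]) (auto intro: mon_lin)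

lemma mon_add: "mon S h \<Longrightarrow> mon S (\<lambda>u. h u + c)"
  unfolding mon_def by auto

lemma propB_g: assumes B: "\<forall>i\<in>I. propB (f i)" shows "propB g"
  unfolding propB_def
proof (intro allI impI)
  fix x y z w :: real
  assume h: "0 \<le> x \<and> x \<le> y \<and> y \<le> 1 \<and> 0 \<le> z \<and> z \<le> w \<and> w \<le> 1"
  let ?D = "\<lambda>u. g u w - g u z"
  have M: "mon {0..1} ?D"
  proof (cases "\<exists>i\<in>I. a i < z \<and> z < b i")
    case True
    then obtain i where i: "i \<in> I" "a i < z" "z < b i" by blast
    note abi = ab[OF i(1)]
    show ?thesis
    proof (cases "\<exists>j\<in>I. a j < w \<and> w < b j")
      case True
      then obtain j where j: "j \<in> I" "a j < w" "w < b j" by blast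
      note abj = ab[OF j(1)]
      show ?thesis
      proof (cases "j = i")
        case True
        have p1: "mon {0..a i} ?D"
          by (rule mon_aff[where c=0 and d=0]) (use G1[OF i] G1[OF j] True in auto)
        have p2: "mon {a i..b i} ?D"
          apply (rule mon_cong[OF _ KB[OF i(1) _ _ , of z w]])
          using L_in[OF i(1)] True i j h B by auto
        have p3: "mon {b i..1} ?D"
          by (rule mon_aff[where c=0 and d="w - z"]) (use G2[OF i] G2[OF j] True in auto)
        show ?thesis using mon_glue[OF mon_glue[OF p1 p2] p3] .
      next
        case False
        then have bij: "b i \<le> a j" using sep[OF i(1) j(1)] h i j by force
        have p1: "mon {0..a i} ?D"
          by (rule mon_aff[where c=0 and d=0]) (use G1[OF i] G1[OF j] abi bij in auto)
        have p2: "mon {a i..b i} ?D"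
          apply (rule mon_cong[OF _ KB[OF i(1) _ _ , of z "b i"]])
          using L_in[OF i(1)] F_ub[OF i(1)] G1[OF j] i h B bij by auto
        have p3: "mon {b i..a j} ?D"
          by (rule mon_aff[where c=1 and d="- z"]) (use G1[OF j] G2[OF i] in auto)
        have p4: "mon {a j..b j} ?D"
          apply (rule mon_cong[where k="\<lambda>u. (F j u w - F j u (a j)) + (a j - z)"])
          using L_in[OF j(1)] F_ua[OF j(1)] G2[OF i] j bij apply auto[1]
          apply (rule mon_add)
          apply (rule KB[OF j(1)])
          using j B by auto
        have p5: "mon {b j..1} ?D"
          by (rule mon_aff[where c=0 and d="w - z"]) (use G2[OF i] G2[OF j] abi abj bij in auto)
        show ?thesis using mon_glue[OF mon_glue[OF mon_glue[OF mon_glue[OF p1 p2] p3] p4] p5] .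
      qed
    next
      case False
      have wb: "b i \<le> w" using False i h by force
      have p1: "mon {0..a i} ?D"
        by (rule mon_aff[where c=0 and d=0]) (use G1[OF i] G3[OF False] wb abi in auto)
      have p2: "mon {a i..b i} ?D"
        apply (rule mon_cong[OF _ KB[OF i(1) _ _ , of z "b i"]])
        using L_in[OF i(1)] F_ub[OF i(1)] G3[OF False] i h B wb by auto
      have p3: "mon {b i..w} ?D"
        by (rule mon_aff[where c=1 and d="- z"]) (use G3[OF False] G2[OF i] in auto)
      have p4: "mon {w..1} ?D"
        by (rule mon_aff[where c=0 and d="w - z"]) (use G2[OF i] G3[OF False] wb in auto)
      show ?thesis using mon_glue[OF mon_glue[OF mon_glue[OF p1 p2] p3] p4] .
    qed
  next
    case zn: False
    show ?thesis
    proof (cases "\<exists>j\<in>I. a j < w \<and> w < b j")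
      case True
      then obtain j where j: "j \<in> I" "a j < w" "w < b j" by blast
      note abj = ab[OF j(1)]
      have za: "z \<le> a j" using zn j h by force
      have p1: "mon {0..z} ?D"
        by (rule mon_aff[where c=0 and d=0]) (use G1[OF j] G3[OF zn] za in auto)
      have p2: "mon {z..a j} ?D"
        by (rule mon_aff[where c=1 and d="- z"]) (use G1[OF j] G3[OF zn] in auto)
      have p3: "mon {a j..b j} ?D"
        apply (rule mon_cong[where k="\<lambda>u. (F j u w - F j u (a j)) + (a j - z)"])
        using L_in[OF j(1)] F_ua[OF j(1)] G3[OF zn] j za apply auto[1]
        apply (rule mon_add)
        apply (rule KB[OF j(1)])
        using j B by auto
      have p4: "mon {b j..1} ?D"
        by (rule mon_aff[where c=0 and d="w - z"]) (use G2[OF j] G3[OF zn] za abj in auto)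
      show ?thesis using mon_glue[OF mon_glue[OF mon_glue[OF p1 p2] p3] p4] .
    next
      case False
      have p1: "mon {0..z} ?D"
        by (rule mon_aff[where c=0 and d=0]) (use G3[OF False] G3[OF zn] h in auto)
      have p2: "mon {z..w} ?D"
        by (rule mon_aff[where c=1 and d="- z"]) (use G3[OF False] G3[OF zn] in auto)
      have p3: "mon {w..1} ?D"
        by (rule mon_aff[where c=0 and d="w - z"]) (use G3[OF False] G3[OF zn] h in auto)
      show ?thesis using mon_glue[OF mon_glue[OF p1 p2] p3] .
    qed
  qed
  then show "g x w - g x z \<le> g y w - g y z" using h unfolding mon_def by auto
qed

end

theorem lemma1:
  fixes I :: "'i set" and f :: "'i \<Rightarrow> real \<Rightarrow> real \<Rightarrow> real" and a b :: "'i \<Rightarrow> real"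
  assumes "countable I"
    and "\<And>i. i \<in> I \<Longrightarrow> 0 \<le> a i \<and> a i < b i \<and> b i \<le> 1"
    and "\<And>i j. i \<in> I \<Longrightarrow> j \<in> I \<Longrightarrow> i \<noteq> j \<Longrightarrow> {a i<..<b i} \<inter> {a j<..<b j} = {}"
    and "\<And>i. i \<in> I \<Longrightarrow> tnorm (f i)"
  shows "((\<forall>i\<in>I. propA (f i)) \<longrightarrow> propA (ordinal_sum I f a b)) \<and>
         ((\<forall>i\<in>I. propB (f i)) \<longrightarrow> propB (ordinal_sum I f a b))"
proof -
  interpret OS I f a b using assms(2-4) by unfold_locales auto
  show ?thesis using propA_g propB_g by blast
qed

end
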